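(* Assume in addition $J\in L^\infty(\mathbb{R}^N)$. Let $0<T$, $\alpha>0$, $h\in L^\infty(\mathbb{R}^N\setminus\Omega)$ with $h\ge0$ and $\int_\Omega\int_{\mathbb{R}^N\setminus\Omega}J(x-y)h(y)\,dy\,dx>0$, and $u_0\in L^\infty(\Omega)$, $u_0\ge0$. Let $u$ be the solution of (N) on $[0,T)$ with $g(y,t)=h(y)(T-t)^{-\alpha}$ and $u(\cdot,0)=u_0$. Then $u$ blows up at time $T$ (i.e. $\|u(\cdot,t)\|_{L^\infty(\Omega)}$ is unbounded as $t\nearrow T$) if and only if $\alpha\ge1$.
   Context: Standing assumptions: $\Omega\subset\mathbb{R}^N$ bounded, connected, smooth; $J\ge0$ symmetric, $\int J=1$, $J>0$ on $B(0,d)$, $J=0$ outside $B(0,d)$. Problem (N): $u_t(x,t)=\int_\Omega J(x-y)(u(y,t)-u(x,t))dy+\int_{\mathbb{R}^N\setminus\Omega}J(x-y)g(y,t)dy$ for $x\in\Omega$ (time-integrated form). *)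

theory Defs
  imports "HOL-Analysis.Analysis"
begin

definition nonlocal_kernel :: "('a::euclidean_space \<Rightarrow> real) \<Rightarrow> real \<Rightarrow> bool" where
  "nonlocal_kernel J d \<longleftrightarrow>
     d > 0 \<and> J \<in> borel_measurable lebesgue \<and> (\<forall>x. J x \<ge> 0) \<and> (\<forall>x. J (- x) = J x) \<and>
     integrable lebesgue J \<and> integral\<^sup>L lebesgue J = 1 \<and>
     (\<forall>x. norm x < d \<longrightarrow> J x > 0) \<and> (\<forall>x. norm x \<ge> d \<longrightarrow> J x = 0)"

definition ess_bounded_on :: "'a::euclidean_space set \<Rightarrow> ('a \<Rightarrow> real) \<Rightarrow> bool" where
  "ess_bounded_on S f \<longleftrightarrow> (\<exists>C. AE x in lebesgue. x \<in> S \<longrightarrow> \<bar>f x\<bar> \<le> C)"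

text \<open>u is a solution of problem (N) on [0,T) with exterior datum g and initial datum u0,
  in time-integrated form: u is measurable on Omega x [0,T), essentially bounded on
  Omega x [0,T'] for every T' < T, and for a.e. x in Omega and all t in [0,T)
  u(x,t) = u0(x) + int_0^t ( int_Omega J(x-y)(u(y,s)-u(x,s)) dy
                             + int_{R^N \ Omega} J(x-y) g(y,s) dy ) ds.\<close>
definition solves_N ::
  "'a::euclidean_space set \<Rightarrow> ('a \<Rightarrow> real) \<Rightarrow> ('a \<Rightarrow> real \<Rightarrow> real) \<Rightarrow> real \<Rightarrow> ('a \<Rightarrow> real)
     \<Rightarrow> ('a \<Rightarrow> real \<Rightarrow> real) \<Rightarrow> bool" where
  "solves_N \<Omega> J g T u0 u \<longleftrightarrow>
     (\<lambda>(x, t). indicator (\<Omega> \<times> {0..<T}) (x, t) * u x t) \<in> borel_measurable (lebesgue \<Otimes>\<^sub>M lborel) \<and>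
     (\<forall>T'\<in>{0..<T}. \<exists>C. AE x in lebesgue. x \<in> \<Omega> \<longrightarrow> (\<forall>t\<in>{0..T'}. \<bar>u x t\<bar> \<le> C)) \<and>
     (AE x in lebesgue. x \<in> \<Omega> \<longrightarrow> (\<forall>t\<in>{0..<T}.
        u x t = u0 x + (LBINT s=0..t.
           (LINT y:\<Omega>|lebesgue. J (x - y) * (u y s - u x s)) +
           (LINT y:(UNIV - \<Omega>)|lebesgue. J (x - y) * g y s))))"

definition blows_up_at :: "'a::euclidean_space set \<Rightarrow> ('a \<Rightarrow> real \<Rightarrow> real) \<Rightarrow> real \<Rightarrow> bool" where
  "blows_up_at \<Omega> u T \<longleftrightarrow>
     (\<forall>C. \<exists>t\<in>{0..<T}. \<not> (AE x in lebesgue. x \<in> \<Omega> \<longrightarrow> \<bar>u x t\<bar> \<le> C))"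

end

theory Submission
  imports Defs
begin


lemma sigma_finite_lebesgue: "sigma_finite_measure lebesgue"
proof
  obtain A :: "'a set set" where A: "countable A" "A \<subseteq> sets lborel" "\<Union>A = space lborel" "\<forall>a\<in>A. emeasure lborel a \<noteq> \<infinity>"
    using sigma_finite_measure.sigma_finite_countable[OF sigma_finite_lborel] by blast
  show "\<exists>A::'a set set. countable A \<and> A \<subseteq> sets lebesgue \<and> \<Union> A = space lebesgue \<and> (\<forall>a\<in>A. emeasure lebesgue a \<noteq> \<infinity>)"
    apply (rule exI[of _ A]) using A by auto
qed

lemma T_eq: "(\<lambda>y. x + (\<Sum>j\<in>Basis. (((\<lambda>_. -1) j) * (y \<bullet> j)) *\<^sub>R j)) = (\<lambda>y::'a::euclidean_space. x - y)"
  by (auto simp: euclidean_representation sum_negf)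

lemma leb_refl: "lebesgue = distr lebesgue lebesgue (\<lambda>y::'a::euclidean_space. x - y)"
  using lebesgue_affine_euclidean[where c="\<lambda>_. -1" and t=x, unfolded T_eq] by (simp add: density_1)

lemma refl_meas: "(\<lambda>y::'a::euclidean_space. x - y) \<in> lebesgue \<rightarrow>\<^sub>M lebesgue"
  using lebesgue_affine_measurable[where c="\<lambda>_. -1" and t=x, unfolded T_eq] by simp

lemma J_shift:
  fixes J :: "'a::euclidean_space \<Rightarrow> real"
  assumes "integrable lebesgue J"
  shows "integrable lebesgue (\<lambda>y. J (x - y))" "(\<integral>y. J (x - y) \<partial>lebesgue) = (\<integral>y. J y \<partial>lebesgue)"
proof -
  have m: "J \<in> borel_measurable lebesgue" using assms by auto
  have "integrable (distr lebesgue lebesgue (\<lambda>y. x - y)) J"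
    using assms leb_refl[of x] by simp
  then show "integrable lebesgue (\<lambda>y. J (x - y))"
    using integrable_distr_eq[OF refl_meas m] by simp
  have "(\<integral>y. J y \<partial>lebesgue) = (\<integral>y. J y \<partial>(distr lebesgue lebesgue (\<lambda>y. x - y)))"
    using leb_refl[of x] by simp
  also have "\<dots> = (\<integral>y. J (x - y) \<partial>lebesgue)"
    by (rule integral_distr[OF refl_meas m])
  finally show "(\<integral>y. J (x - y) \<partial>lebesgue) = (\<integral>y. J y \<partial>lebesgue)" by simp
qed

lemma J_shift_set:
  fixes J :: "'a::euclidean_space \<Rightarrow> real"
  assumes "integrable lebesgue J" "\<And>x. J x \<ge> 0" "S \<in> sets lebesgue"
  shows "set_integrable lebesgue S (\<lambda>y. J (x - y))"
    "(LINT y:S|lebesgue. J (x - y)) \<le> (\<integral>y. J y \<partial>lebesgue)"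
    "(LINT y:S|lebesgue. J (x - y)) \<ge> 0"
proof -
  note I = J_shift[OF assms(1), of x]
  show si: "set_integrable lebesgue S (\<lambda>y. J (x - y))"
    unfolding set_integrable_def by (rule integrable_mult_indicator[OF assms(3) I(1)])
  have "(LINT y:S|lebesgue. J (x - y)) \<le> (\<integral>y. J (x - y) \<partial>lebesgue)"
    unfolding set_lebesgue_integral_def
    apply (rule integral_mono[OF si[unfolded set_integrable_def] I(1)])
    using assms(2) by (auto simp: indicator_def)
  then show "(LINT y:S|lebesgue. J (x - y)) \<le> (\<integral>y. J y \<partial>lebesgue)" using I(2) by simp
  show "(LINT y:S|lebesgue. J (x - y)) \<ge> 0"
    unfolding set_lebesgue_integral_def
    by (rule integral_nonneg_AE) (use assms(2) in \<open>auto simp: indicator_def\<close>)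
qed

lemma set_abs_bound:
  fixes f g :: "'b \<Rightarrow> real"
  assumes "set_integrable M S g" "AE y in M. y \<in> S \<longrightarrow> \<bar>f y\<bar> \<le> g y"
  shows "\<bar>LINT y:S|M. f y\<bar> \<le> (LINT y:S|M. g y)"
proof -
  have "\<bar>LINT y:S|M. f y\<bar> \<le> (\<integral>y. \<bar>indicator S y *\<^sub>R f y\<bar> \<partial>M)"
    unfolding set_lebesgue_integral_def by (rule integral_abs_bound)
  also have "\<dots> \<le> (\<integral>y. indicator S y *\<^sub>R g y \<partial>M)"
    apply (rule integral_mono_AE')
    using assms(1) apply (simp add: set_integrable_def)
    subgoal using assms(2) by eventually_elim (auto simp: indicator_def)
    subgoal using assms(2) by eventually_elim (auto simp: indicator_def)
    done
  finally show ?thesis unfolding set_lebesgue_integral_def .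
qed

lemma lbint_Icc: "0 \<le> z \<Longrightarrow> (LBINT r=0..z. f r) = (LINT r:{0..z}|lborel. f r)"
  using interval_integral_Icc[of 0 z f] by (simp add: zero_ereal_def)

lemma lbint_abs_le:
  fixes f g :: "real \<Rightarrow> real"
  assumes "0 \<le> z" "continuous_on {0..z} g" "\<And>r. r \<in> {0..z} \<Longrightarrow> \<bar>f r\<bar> \<le> g r"
  shows "\<bar>LBINT r=0..z. f r\<bar> \<le> (LBINT r=0..z. g r)"
  unfolding lbint_Icc[OF assms(1)]
  apply (rule set_abs_bound)
  using borel_integrable_compact[OF _ assms(2)] apply (simp add: set_integrable_def)
  using assms(3) by auto

lemma lbint_lower:
  fixes f g :: "real \<Rightarrow> real"
  assumes "0 \<le> z" "set_integrable lborel {0..z} f" "continuous_on {0..z} g"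
    "AE r in lborel. r \<in> {0..z} \<longrightarrow> g r \<le> f r"
  shows "(LBINT r=0..z. g r) \<le> (LBINT r=0..z. f r)"
  unfolding lbint_Icc[OF assms(1)]
  apply (rule set_integral_mono_AE)
  using borel_integrable_compact[OF _ assms(3)] apply (simp add: set_integrable_def)
  using assms by auto

lemma d1: "((\<lambda>r. C*(2*r)^(Suc n)/fact (Suc n)) has_real_derivative 2*C*(2*x)^n/fact n) (at x)"
proof -
  have p: "((\<lambda>y. y^(Suc n)) has_real_derivative real (Suc n) * (2*x)^n) (at (2*x))"
    using DERIV_pow[of "Suc n" "2*x"] by simp
  have m: "((\<lambda>r. 2*r) has_real_derivative 2) (at x)"
    by (auto intro!: derivative_eq_intros)
  have "((\<lambda>r. (2*r)^(Suc n)) has_real_derivative real (Suc n) * (2*x)^n * 2) (at x)"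
    using DERIV_chain2[OF p m] by simp
  then have "((\<lambda>r. C*(2*r)^(Suc n)/fact (Suc n)) has_real_derivative C*(real (Suc n)*(2*x)^n*2)/fact (Suc n)) (at x)"
    by (intro DERIV_cdivide DERIV_cmult)
  moreover have "C*(real (Suc n)*(2*x)^n*2)/fact (Suc n) = 2*C*(2*x)^n/fact n"
    by (simp add: field_simps del: of_nat_Suc)
  ultimately show ?thesis by metis
qed
lemma d2: assumes "x < T" "\<alpha> < 1"
  shows "((\<lambda>r. H*(T-r) powr (1-\<alpha>)/(1-\<alpha>)) has_real_derivative -(H*(T-x) powr (-\<alpha>))) (at x)"
proof -
  have p: "((\<lambda>y. y powr (1-\<alpha>)) has_real_derivative (1-\<alpha>) * (T-x) powr (1-\<alpha>-1)) (at (T-x))"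
    using assms by (intro has_real_derivative_powr) auto
  have m: "((\<lambda>r. T - r) has_real_derivative -1) (at x)"
    by (auto intro!: derivative_eq_intros)
  have "((\<lambda>r. (T-r) powr (1-\<alpha>)) has_real_derivative (1-\<alpha>) * (T-x) powr (1-\<alpha>-1) * -1) (at x)"
    using DERIV_chain2[OF p m] by simp
  then have "((\<lambda>r. H*(T-r) powr (1-\<alpha>)/(1-\<alpha>)) has_real_derivative H*((1-\<alpha>) * (T-x) powr (1-\<alpha>-1) * -1)/(1-\<alpha>)) (at x)"
    using assms by (auto intro!: derivative_eq_intros)
  moreover have "H*((1-\<alpha>) * (T-x) powr (1-\<alpha>-1) * -1)/(1-\<alpha>) = -(H*(T-x) powr (-\<alpha>))"
    using assms by simp
  ultimately show ?thesis by simp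
qed

lemma ftc1:
  fixes K C H T \<alpha> z :: real
  assumes "0 \<le> z" "z < T" "\<alpha> < 1"
  shows "(LBINT r=0..z. 2*K*exp(2*r) + 2*C*(2*r)^n/fact n + H*(T-r) powr (-\<alpha>)) =
    (K*exp(2*z) + C*(2*z)^(Suc n)/fact (Suc n) - H*(T-z) powr (1-\<alpha>)/(1-\<alpha>))
    - (K - H*T powr (1-\<alpha>)/(1-\<alpha>))"
proof -
  have "(LBINT r=ereal 0..ereal z. 2*K*exp(2*r) + 2*C*(2*r)^n/fact n + H*(T-r) powr (-\<alpha>)) =
    (\<lambda>r. K*exp(2*r) + C*(2*r)^(Suc n)/fact (Suc n) - H*(T-r) powr (1-\<alpha>)/(1-\<alpha>)) z
    - (\<lambda>r. K*exp(2*r) + C*(2*r)^(Suc n)/fact (Suc n) - H*(T-r) powr (1-\<alpha>)/(1-\<alpha>)) 0"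
  proof (rule interval_integral_FTC_finite)
    show "continuous_on {min 0 z..max 0 z} (\<lambda>r. 2*K*exp(2*r) + 2*C*(2*r)^n/fact n + H*(T-r) powr (-\<alpha>))"
      using assms by (intro continuous_intros) auto
    fix x assume x: "min 0 z \<le> x" "x \<le> max 0 z"
    then have xT: "x < T" using assms by auto
    have "((\<lambda>r. K*exp(2*r) + C*(2*r)^(Suc n)/fact (Suc n) - H*(T-r) powr (1-\<alpha>)/(1-\<alpha>)) has_real_derivative
       (2*K*exp(2*x) + 2*C*(2*x)^n/fact n + H*(T-x) powr (-\<alpha>))) (at x)"
    proof -
      have e: "((\<lambda>r. K*exp(2*r)) has_real_derivative 2*K*exp(2*x)) (at x)"
      proof -
        have "((\<lambda>r. K*exp(2*r)) has_real_derivative K*(exp(2*x)*(2))) (at x)"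
          by (auto intro!: derivative_eq_intros)
        then show ?thesis by (simp add: algebra_simps)
      qed
      show ?thesis
        using DERIV_diff[OF DERIV_add[OF e d1[of C n x]] d2[OF xT assms(3), of H]] by simp
    qed
    then show "((\<lambda>r. K*exp(2*r) + C*(2*r)^(Suc n)/fact (Suc n) - H*(T-r) powr (1-\<alpha>)/(1-\<alpha>)) has_vector_derivative
       (2*K*exp(2*x) + 2*C*(2*x)^n/fact n + H*(T-x) powr (-\<alpha>))) (at x within {min 0 z..max 0 z})"
      by (simp add: has_real_derivative_iff_has_vector_derivative[symmetric] has_field_derivative_at_within)
  qed
  then show ?thesis by (simp add: zero_ereal_def)
qed

lemma ftc2:
  fixes C c T t :: real
  assumes "0 \<le> t" "t < T"
  shows "(LBINT r=0..t. -2*C + c/(T-r)) = -2*C*t - c*ln(T-t) + c*ln T"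
proof -
  have "(LBINT r=ereal 0..ereal t. -2*C + c/(T-r)) = (\<lambda>r. -2*C*r - c*ln(T-r)) t - (\<lambda>r. -2*C*r - c*ln(T-r)) 0"
  proof (rule interval_integral_FTC_finite)
    show "continuous_on {min 0 t..max 0 t} (\<lambda>r. -2*C + c/(T-r))"
      using assms by (intro continuous_intros) auto
    fix x assume x: "min 0 t \<le> x" "x \<le> max 0 t"
    then have xT: "x < T" using assms by auto
    have "((\<lambda>r. -2*C*r - c*ln(T-r)) has_real_derivative (-2*C + c/(T-x))) (at x)"
    proof -
      have "((\<lambda>r. -2*C*r - c*ln(T-r)) has_real_derivative (-2*C*1 - c*((-1)/(T-x)))) (at x)"
        using xT by (auto intro!: derivative_eq_intros)
      then show ?thesis by simp
    qed
    then show "((\<lambda>r. -2*C*r - c*ln(T-r)) has_vector_derivative (-2*C + c/(T-x))) (at x within {min 0 t..max 0 t})"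
      by (simp add: has_real_derivative_iff_has_vector_derivative[symmetric] has_field_derivative_at_within)
  qed
  then show ?thesis by (simp add: zero_ereal_def)
qed

lemma inner_bound:
  fixes J f :: "'a::euclidean_space \<Rightarrow> real"
  assumes Jnn: "\<And>x. J x \<ge> 0" and Jint: "integrable lebesgue J" and J1: "integral\<^sup>L lebesgue J = 1"
    and S: "S \<in> sets lebesgue" and B: "B \<ge> 0" and f: "AE y in lebesgue. y \<in> S \<longrightarrow> \<bar>f y\<bar> \<le> B"
  shows "\<bar>LINT y:S|lebesgue. J (x - y) * f y\<bar> \<le> B"
proof -
  note JS = J_shift_set[OF Jint Jnn S, of x]
  have "\<bar>LINT y:S|lebesgue. J (x - y) * f y\<bar> \<le> (LINT y:S|lebesgue. J (x - y) * B)"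
  proof (rule set_abs_bound)
    show "set_integrable lebesgue S (\<lambda>y. J (x - y) * B)" using JS(1) by auto
    show "AE y in lebesgue. y \<in> S \<longrightarrow> \<bar>J (x - y) * f y\<bar> \<le> J (x - y) * B"
      using f
    proof eventually_elim
      case (elim y)
      then show ?case using Jnn[of "x-y"] by (auto simp: abs_mult intro: mult_left_mono)
    qed
  qed
  also have "\<dots> = (LINT y:S|lebesgue. J (x - y)) * B" by simp
  also have "\<dots> \<le> 1 * B" using JS(2) J1 B by (intro mult_right_mono) auto
  finally show ?thesis by simp
qed

lemma pow_fact_lim: "(\<lambda>n. c * (x::real)^n / fact n) \<longlonglongrightarrow> 0"
proof -
  have "(\<lambda>n. inverse (fact n) * x^n) \<longlonglongrightarrow> 0"
    by (rule summable_LIMSEQ_zero[OF summable_exp])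
  then have "(\<lambda>n. c * (inverse (fact n) * x^n)) \<longlonglongrightarrow> c * 0"
    by (intro tendsto_mult tendsto_const)
  then show ?thesis by (simp add: field_simps)
qed

lemma dir1:
  fixes \<Omega> :: "'a::euclidean_space set" and J h u0 :: "'a \<Rightarrow> real" and u :: "'a \<Rightarrow> real \<Rightarrow> real"
  assumes Jnn: "\<And>x. J x \<ge> 0" and Jint: "integrable lebesgue J" and J1: "integral\<^sup>L lebesgue J = 1"
    and Om: "\<Omega> \<in> sets lebesgue"
    and T: "T > 0" and a: "0 < \<alpha>" "\<alpha> < 1"
    and H: "H \<ge> 0" "AE y in lebesgue. y \<in> UNIV - \<Omega> \<longrightarrow> \<bar>h y\<bar> \<le> H"
    and U0: "U0 \<ge> 0" "AE x in lebesgue. x \<in> \<Omega> \<longrightarrow> \<bar>u0 x\<bar> \<le> U0"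
    and bnd: "\<forall>T'\<in>{0..<T}. \<exists>C. AE x in lebesgue. x \<in> \<Omega> \<longrightarrow> (\<forall>t\<in>{0..T'}. \<bar>u x t\<bar> \<le> C)"
    and eq: "AE x in lebesgue. x \<in> \<Omega> \<longrightarrow> (\<forall>t\<in>{0..<T}.
        u x t = u0 x + (LBINT s=0..t.
           (LINT y:\<Omega>|lebesgue. J (x - y) * (u y s - u x s)) +
           (LINT y:(UNIV - \<Omega>)|lebesgue. J (x - y) * (h y * (T - s) powr (- \<alpha>)))))"
    and t: "t \<in> {0..<T}"
  shows "AE x in lebesgue. x \<in> \<Omega> \<longrightarrow> \<bar>u x t\<bar> \<le> (U0 + H * T powr (1-\<alpha>)/(1-\<alpha>)) * exp(2*T)"
proof -
  obtain C0 where C0: "AE x in lebesgue. x \<in> \<Omega> \<longrightarrow> (\<forall>s\<in>{0..t}. \<bar>u x s\<bar> \<le> C0)"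
    using bnd t by blast
  define C where "C = max C0 0"
  have C: "AE x in lebesgue. x \<in> \<Omega> \<longrightarrow> (\<forall>s\<in>{0..t}. \<bar>u x s\<bar> \<le> C)"
    using C0 by eventually_elim (force simp: C_def)
  have C_nn: "C \<ge> 0" by (simp add: C_def)
  define K where "K = U0 + H * T powr (1-\<alpha>)/(1-\<alpha>)"
  have K_nn: "K \<ge> 0" using U0 H a by (simp add: K_def)
  define \<phi> where "\<phi> n z = K*exp(2*z) + C*(2*z)^n/fact n" for n :: nat and z :: real
  have \<phi>_nn: "\<phi> n z \<ge> 0" if "z \<ge> 0" for n z
    using K_nn C_nn that by (simp add: \<phi>_def)
  have claim: "AE x in lebesgue. x \<in> \<Omega> \<longrightarrow> (\<forall>z\<in>{0..t}. \<bar>u x z\<bar> \<le> \<phi> n z)" for n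
  proof (induction n)
    case 0
    show ?case using C
    proof eventually_elim
      case (elim x)
      show ?case
      proof (intro impI ballI)
        fix z assume x: "x \<in> \<Omega>" and z: "z \<in> {0..t}"
        have "\<bar>u x z\<bar> \<le> C" using elim x z by blast
        moreover have "K*exp(2*z) \<ge> 0" using K_nn by simp
        ultimately show "\<bar>u x z\<bar> \<le> \<phi> 0 z" by (simp add: \<phi>_def)
      qed
    qed
  next
    case (Suc n)
    show ?case using eq U0(2) Suc.IH
    proof eventually_elim
      case (elim x)
      show ?case
      proof (intro impI ballI)
        assume x: "x \<in> \<Omega>"
        fix z assume z: "z \<in> {0..t}"
        then have zT: "z < T" "0 \<le> z" using t by auto
        have eqx: "u x z = u0 x + (LBINT s=0..z.
           (LINT y:\<Omega>|lebesgue. J (x - y) * (u y s - u x s)) +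
           (LINT y:(UNIV - \<Omega>)|lebesgue. J (x - y) * (h y * (T - s) powr (- \<alpha>))))"
          using elim(1)[rule_format, OF x, of z] zT by simp
        have IHx: "\<forall>s\<in>{0..t}. \<bar>u x s\<bar> \<le> \<phi> n s" using elim(3) x by blast
        have Fb: "\<bar>(LINT y:\<Omega>|lebesgue. J (x - y) * (u y r - u x r)) +
           (LINT y:(UNIV - \<Omega>)|lebesgue. J (x - y) * (h y * (T - r) powr (- \<alpha>)))\<bar>
           \<le> 2*K*exp(2*r) + 2*C*(2*r)^n/fact n + H*(T-r) powr (-\<alpha>)" if r: "r \<in> {0..z}" for r
        proof -
          have rt: "r \<in> {0..t}" using r z by auto
          have A: "\<bar>LINT y:\<Omega>|lebesgue. J (x - y) * (u y r - u x r)\<bar> \<le> 2 * \<phi> n r"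
          proof (rule inner_bound[OF Jnn Jint J1 Om])
            show "0 \<le> 2 * \<phi> n r" using \<phi>_nn rt by auto
            show "AE y in lebesgue. y \<in> \<Omega> \<longrightarrow> \<bar>u y r - u x r\<bar> \<le> 2 * \<phi> n r"
              using Suc.IH
            proof eventually_elim
              case (elim y)
              show ?case
              proof
                assume y: "y \<in> \<Omega>"
                have "\<bar>u y r\<bar> \<le> \<phi> n r" using elim y rt by blast
                moreover have "\<bar>u x r\<bar> \<le> \<phi> n r" using IHx rt by blast
                moreover have "\<bar>u y r - u x r\<bar> \<le> \<bar>u y r\<bar> + \<bar>u x r\<bar>" by (rule abs_triangle_ineq4)
                ultimately show "\<bar>u y r - u x r\<bar> \<le> 2 * \<phi> n r" by linarith
              qed
            qed
          qed
          have E: "\<bar>LINT y:(UNIV - \<Omega>)|lebesgue. J (x - y) * (h y * (T - r) powr (- \<alpha>))\<bar> \<le> H*(T-r) powr (-\<alpha>)"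
          proof (rule inner_bound[OF Jnn Jint J1])
            show "UNIV - \<Omega> \<in> sets lebesgue" using sets.compl_sets[OF Om] by simp
            show "0 \<le> H*(T-r) powr (-\<alpha>)" using H by simp
            show "AE y in lebesgue. y \<in> UNIV - \<Omega> \<longrightarrow> \<bar>h y * (T - r) powr (- \<alpha>)\<bar> \<le> H*(T-r) powr (-\<alpha>)"
              using H(2)
            proof eventually_elim
              case (elim y)
              then show ?case by (auto simp: abs_mult intro!: mult_right_mono)
            qed
          qed
          show ?thesis using A E by (simp add: \<phi>_def)
        qed
        have "\<bar>LBINT s=0..z.
           (LINT y:\<Omega>|lebesgue. J (x - y) * (u y s - u x s)) +
           (LINT y:(UNIV - \<Omega>)|lebesgue. J (x - y) * (h y * (T - s) powr (- \<alpha>)))\<bar>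
          \<le> (LBINT r=0..z. 2*K*exp(2*r) + 2*C*(2*r)^n/fact n + H*(T-r) powr (-\<alpha>))"
        proof (rule lbint_abs_le[OF zT(2)])
          show "continuous_on {0..z} (\<lambda>r. 2*K*exp(2*r) + 2*C*(2*r)^n/fact n + H*(T-r) powr (-\<alpha>))"
            using zT by (intro continuous_intros) auto
        qed (use Fb in auto)
        also have "\<dots> = (K*exp(2*z) + C*(2*z)^(Suc n)/fact (Suc n) - H*(T-z) powr (1-\<alpha>)/(1-\<alpha>))
          - (K - H*T powr (1-\<alpha>)/(1-\<alpha>))"
          by (rule ftc1[OF zT(2) zT(1) a(2)])
        finally have I: "\<bar>LBINT s=0..z.
           (LINT y:\<Omega>|lebesgue. J (x - y) * (u y s - u x s)) +
           (LINT y:(UNIV - \<Omega>)|lebesgue. J (x - y) * (h y * (T - s) powr (- \<alpha>)))\<bar>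
          \<le> (K*exp(2*z) + C*(2*z)^(Suc n)/fact (Suc n) - H*(T-z) powr (1-\<alpha>)/(1-\<alpha>))
          - (K - H*T powr (1-\<alpha>)/(1-\<alpha>))" .
        have u0x: "\<bar>u0 x\<bar> \<le> U0" using elim(2) x by blast
        have nn: "H*(T-z) powr (1-\<alpha>)/(1-\<alpha>) \<ge> 0" using H a by simp
        have "\<bar>u x z\<bar> \<le> \<bar>u0 x\<bar> + \<bar>LBINT s=0..z.
           (LINT y:\<Omega>|lebesgue. J (x - y) * (u y s - u x s)) +
           (LINT y:(UNIV - \<Omega>)|lebesgue. J (x - y) * (h y * (T - s) powr (- \<alpha>)))\<bar>"
          unfolding eqx by (rule abs_triangle_ineq)
        also have "\<dots> \<le> \<phi> (Suc n) z"
          using I u0x nn by (simp add: \<phi>_def K_def)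
        finally show "\<bar>u x z\<bar> \<le> \<phi> (Suc n) z" .
      qed
    qed
  qed
  have "AE x in lebesgue. \<forall>n. x \<in> \<Omega> \<longrightarrow> (\<forall>z\<in>{0..t}. \<bar>u x z\<bar> \<le> \<phi> n z)"
    by (subst AE_all_countable) (use claim in blast)
  then show ?thesis
  proof eventually_elim
    case (elim x)
    show ?case
    proof
      assume x: "x \<in> \<Omega>"
      have tt: "t \<in> {0..t}" using t by auto
      have lim: "(\<lambda>n. \<phi> n t) \<longlonglongrightarrow> K*exp(2*t) + 0"
        unfolding \<phi>_def by (intro tendsto_add tendsto_const pow_fact_lim)
      have "\<bar>u x t\<bar> \<le> K*exp(2*t)"
        using LIMSEQ_le_const[OF lim, of "\<bar>u x t\<bar>"] elim x tt by auto
      also have "\<dots> \<le> K*exp(2*T)" using K_nn t by (intro mult_left_mono) auto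
      finally show "\<bar>u x t\<bar> \<le> (U0 + H * T powr (1-\<alpha>)/(1-\<alpha>)) * exp(2*T)" by (simp add: K_def)
    qed
  qed
qed

lemma meas_A:
  fixes U :: "'a::euclidean_space \<times> real \<Rightarrow> real" and J :: "'a \<Rightarrow> real"
  assumes U: "U \<in> borel_measurable (lebesgue \<Otimes>\<^sub>M lborel)" and J: "J \<in> borel_measurable lebesgue"
    and Om: "\<Omega> \<in> sets lebesgue"
  shows "(\<lambda>s. \<integral>y. indicator \<Omega> y * (J (x - y) * (U (y, s) - U (x, s))) \<partial>lebesgue) \<in> borel_measurable lborel"
proof -
  have U1: "(\<lambda>z. U (snd z, fst z)) \<in> borel_measurable (lborel \<Otimes>\<^sub>M lebesgue)"
  proof -
    have "(\<lambda>z. U (snd z, fst z)) = U \<circ> (\<lambda>(x, y). (y, x))" by (auto simp: fun_eq_iff)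
    then show ?thesis using measurable_comp[OF measurable_pair_swap' U] by simp
  qed
  have U2: "(\<lambda>z::real \<times> 'a. U (x, fst z)) \<in> borel_measurable (lborel \<Otimes>\<^sub>M lebesgue)"
    using measurable_comp[OF measurable_fst measurable_Pair2[OF U, of x]] by (simp add: comp_def)
  have J2: "(\<lambda>z::real \<times> 'a. J (x - snd z)) \<in> borel_measurable (lborel \<Otimes>\<^sub>M lebesgue)"
    using measurable_comp[OF measurable_snd measurable_comp[OF refl_meas[of x] J]] by (simp add: comp_def)
  have I2: "(\<lambda>z::real \<times> 'a. indicator \<Omega> (snd z) :: real) \<in> borel_measurable (lborel \<Otimes>\<^sub>M lebesgue)"
    using measurable_comp[OF measurable_snd borel_measurable_indicator[OF Om]] by (simp add: comp_def)
  have "(\<lambda>z::real \<times> 'a. indicator \<Omega> (snd z) * (J (x - snd z) * (U (snd z, fst z) - U (x, fst z)))) \<in> borel_measurable (lborel \<Otimes>\<^sub>M lebesgue)"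
    using U1 U2 J2 I2 by measurable
  then show ?thesis
    by (intro sigma_finite_measure.borel_measurable_lebesgue_integral[OF sigma_finite_lebesgue]) (simp add: case_prod_beta)
qed

lemma fubini_AE:
  fixes U :: "'a::euclidean_space \<times> real \<Rightarrow> real"
  assumes U: "U \<in> borel_measurable (lebesgue \<Otimes>\<^sub>M lborel)" and Om: "\<Omega> \<in> sets lebesgue"
    and P: "\<And>s. s \<in> {0..t} \<Longrightarrow> AE x in lebesgue. x \<in> \<Omega> \<longrightarrow> \<bar>U (x, s)\<bar> \<le> C"
  shows "AE x in lebesgue. AE s in lborel. (x \<in> \<Omega> \<and> s \<in> {0..t}) \<longrightarrow> \<bar>U (x, s)\<bar> \<le> C"
proof -
  interpret P: pair_sigma_finite lebesgue "lborel :: real measure"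
    unfolding pair_sigma_finite_def using sigma_finite_lebesgue sigma_finite_lborel by blast
  have "Measurable.pred (lebesgue \<Otimes>\<^sub>M lborel) (\<lambda>z. (fst z \<in> \<Omega> \<and> snd z \<in> {0..t}) \<longrightarrow> \<bar>U z\<bar> \<le> C)"
    using U Om by measurable
  then have m: "{z \<in> space (lebesgue \<Otimes>\<^sub>M lborel). (fst z \<in> \<Omega> \<and> snd z \<in> {0..t}) \<longrightarrow> \<bar>U (fst z, snd z)\<bar> \<le> C} \<in> sets (lebesgue \<Otimes>\<^sub>M lborel)"
    by (simp add: pred_def)
  have "AE s in lborel. AE x in lebesgue. (x \<in> \<Omega> \<and> s \<in> {0..t}) \<longrightarrow> \<bar>U (x, s)\<bar> \<le> C"
  proof (rule AE_I2)
    fix s :: real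
    show "AE x in lebesgue. (x \<in> \<Omega> \<and> s \<in> {0..t}) \<longrightarrow> \<bar>U (x, s)\<bar> \<le> C"
    proof (cases "s \<in> {0..t}")
      case True
      then show ?thesis using P[OF True] by eventually_elim auto
    next
      case False
      then show ?thesis by (intro AE_I2) auto
    qed
  qed
  then show ?thesis using P.AE_commute[OF m] by simp
qed

lemma dir2:
  fixes \<Omega> :: "'a::euclidean_space set" and J h u0 :: "'a \<Rightarrow> real" and u :: "'a \<Rightarrow> real \<Rightarrow> real"
    and U :: "'a \<times> real \<Rightarrow> real"
  assumes Jnn: "\<And>x. J x \<ge> 0" and Jint: "integrable lebesgue J" and J1: "integral\<^sup>L lebesgue J = 1"
    and Jm: "J \<in> borel_measurable lebesgue"
    and Om: "\<Omega> \<in> sets lebesgue"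
    and T: "T > 0" and a: "1 \<le> \<alpha>"
    and U: "U \<in> borel_measurable (lebesgue \<Otimes>\<^sub>M lborel)"
    and Ueq: "\<And>x s. x \<in> \<Omega> \<Longrightarrow> s \<in> {0..<T} \<Longrightarrow> U (x, s) = u x s"
    and bnd: "\<forall>T'\<in>{0..<T}. \<exists>C. AE x in lebesgue. x \<in> \<Omega> \<longrightarrow> (\<forall>t\<in>{0..T'}. \<bar>u x t\<bar> \<le> C)"
    and eq: "AE x in lebesgue. x \<in> \<Omega> \<longrightarrow> (\<forall>t\<in>{0..<T}.
        u x t = u0 x + (LBINT s=0..t.
           (LINT y:\<Omega>|lebesgue. J (x - y) * (u y s - u x s)) +
           (LINT y:(UNIV - \<Omega>)|lebesgue. J (x - y) * (h y * (T - s) powr (- \<alpha>)))))"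
    and u0nn: "AE x in lebesgue. x \<in> \<Omega> \<longrightarrow> u0 x \<ge> 0"
    and eps: "\<epsilon> > 0"
    and Gpos: "\<not> (AE x in lebesgue. x \<in> \<Omega> \<longrightarrow> (LINT y:(UNIV - \<Omega>)|lebesgue. J (x - y) * h y) \<le> \<epsilon>)"
    and C: "C \<ge> 0" and nb: "\<forall>t\<in>{0..<T}. AE x in lebesgue. x \<in> \<Omega> \<longrightarrow> \<bar>u x t\<bar> \<le> C"
  shows False
proof -
  define c where "c = \<epsilon> * T powr (1-\<alpha>)"
  have c: "c > 0" using eps T by (simp add: c_def)
  define M where "M = (2*C*T + C + 1)/c"
  have "2*C*T \<ge> 0" using C T by simp
  then have M: "M > 0" using c C unfolding M_def by (intro divide_pos_pos) linarith+
  have cM: "c * M = 2*C*T + C + 1" using c by (simp add: M_def)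
  define t where "t = T - T*exp(-M)"
  have em: "exp(-M) \<le> 1" using M by simp
  have t: "0 \<le> t" "t < T" using em T by (auto simp: t_def mult_le_cancel_left1)
  have Tt: "T - t = T * exp (-M)" by (simp add: t_def)
  have lnM: "ln T - ln (T - t) = M" using T by (simp add: Tt ln_mult)
  obtain Ct0 where Ct0: "AE x in lebesgue. x \<in> \<Omega> \<longrightarrow> (\<forall>s\<in>{0..t}. \<bar>u x s\<bar> \<le> Ct0)"
    using bspec[OF bnd, of t] t by auto
  define Ct where "Ct = max Ct0 0"
  have Ct: "AE x in lebesgue. x \<in> \<Omega> \<longrightarrow> (\<forall>s\<in>{0..t}. \<bar>u x s\<bar> \<le> Ct)"
    using Ct0 by eventually_elim (force simp: Ct_def)
  have Ct_nn: "Ct \<ge> 0" by (simp add: Ct_def)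
  have fub: "AE x in lebesgue. AE s in lborel. (x \<in> \<Omega> \<and> s \<in> {0..t}) \<longrightarrow> \<bar>U (x, s)\<bar> \<le> C"
  proof (rule fubini_AE[OF U Om])
    fix s assume s: "s \<in> {0..t}"
    then have s': "s \<in> {0..<T}" using t by auto
    show "AE x in lebesgue. x \<in> \<Omega> \<longrightarrow> \<bar>U (x, s)\<bar> \<le> C"
      using nb s' by (auto elim!: AE_mp intro!: AE_I2 simp: Ueq)
  qed
  have tT: "t \<in> {0..<T}" using t by auto
  have "AE x in lebesgue. x \<in> \<Omega> \<longrightarrow> (LINT y:(UNIV - \<Omega>)|lebesgue. J (x - y) * h y) \<le> \<epsilon>"
    using bspec[OF nb tT] eq u0nn Ct fub
  proof eventually_elim
    case (elim x)
    show ?case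
    proof (intro impI, rule ccontr)
      assume x: "x \<in> \<Omega>"
      define G where "G = (LINT y:(UNIV - \<Omega>)|lebesgue. J (x - y) * h y)"
      assume "\<not> (LINT y:(UNIV - \<Omega>)|lebesgue. J (x - y) * h y) \<le> \<epsilon>"
      then have Gx: "G > \<epsilon>" by (simp add: G_def)
      define A where "A s = (LINT y:\<Omega>|lebesgue. J (x - y) * (u y s - u x s))" for s
      have ux: "\<bar>u x t\<bar> \<le> C" using elim(1) x by blast
      have Erw: "(LINT y:(UNIV - \<Omega>)|lebesgue. J (x - y) * (h y * (T - s) powr (- \<alpha>))) = G * (T - s) powr (- \<alpha>)" for s
        by (simp add: G_def mult.assoc[symmetric])
      have eqx: "u x t = u0 x + (LBINT s=0..t. A s + G * (T - s) powr (- \<alpha>))"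
        using elim(2)[rule_format, OF x, of t] tT by (simp add: Erw A_def)
      have u0x: "u0 x \<ge> 0" using elim(3) x by blast
      have Ctx: "\<forall>s\<in>{0..t}. \<bar>u x s\<bar> \<le> Ct" using elim(4) x by blast
      have Abnd: "\<bar>A s\<bar> \<le> 2*Ct" if s: "s \<in> {0..t}" for s
        unfolding A_def
      proof (rule inner_bound[OF Jnn Jint J1 Om])
        show "0 \<le> 2*Ct" using Ct_nn by simp
        show "AE y in lebesgue. y \<in> \<Omega> \<longrightarrow> \<bar>u y s - u x s\<bar> \<le> 2*Ct"
          using Ct
        proof eventually_elim
          case (elim y)
          show ?case
          proof
            assume y: "y \<in> \<Omega>"
            have "\<bar>u y s\<bar> \<le> Ct" using elim y s by blast
            moreover have "\<bar>u x s\<bar> \<le> Ct" using Ctx s by blast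
            moreover have "\<bar>u y s - u x s\<bar> \<le> \<bar>u y s\<bar> + \<bar>u x s\<bar>" by (rule abs_triangle_ineq4)
            ultimately show "\<bar>u y s - u x s\<bar> \<le> 2*Ct" by linarith
          qed
        qed
      qed
      define A' where "A' s = (\<integral>y. indicator \<Omega> y * (J (x - y) * (U (y, s) - U (x, s))) \<partial>lebesgue)" for s
      have A'm: "A' \<in> borel_measurable lborel"
        unfolding A'_def by (rule meas_A[OF U Jm Om])
      have AA': "A s = A' s" if s: "s \<in> {0..t}" for s
        unfolding A_def A'_def set_lebesgue_integral_def
      proof (rule Bochner_Integration.integral_cong[OF refl])
        fix y
        have sT: "s \<in> {0..<T}" using s t by auto
        show "indicator \<Omega> y *\<^sub>R (J (x - y) * (u y s - u x s)) = indicator \<Omega> y * (J (x - y) * (U (y, s) - U (x, s)))"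
          by (cases "y \<in> \<Omega>") (auto simp: Ueq[OF x sT] Ueq[OF _ sT])
      qed
      have Ameas: "set_borel_measurable lborel {0..t} A"
      proof -
        have "(\<lambda>s. indicator {0..t} s *\<^sub>R A s) = (\<lambda>s. indicator {0..t} s * A' s)"
          using AA' by (auto simp: fun_eq_iff indicator_def)
        moreover have "(\<lambda>s. indicator {0..t} s * A' s) \<in> borel_measurable lborel"
          using A'm by measurable
        ultimately show ?thesis unfolding set_borel_measurable_def by simp
      qed
      have Aint: "set_integrable lborel {0..t} A"
      proof (rule set_integrable_bound[OF _ Ameas])
        show "set_integrable lborel {0..t} (\<lambda>_. 2*Ct)"
          unfolding set_integrable_def
          by (rule borel_integrable_compact) (auto intro: continuous_intros)
        show "AE s\<in>{0..t} in lborel. norm (A s) \<le> norm (2*Ct)"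
          using Abnd Ct_nn by (intro AE_I2) auto
      qed
      have Eint: "set_integrable lborel {0..t} (\<lambda>s. G * (T - s) powr (- \<alpha>))"
        unfolding set_integrable_def
        by (rule borel_integrable_compact) (use t in \<open>auto intro!: continuous_intros\<close>)
      have Fint: "set_integrable lborel {0..t} (\<lambda>s. A s + G * (T - s) powr (- \<alpha>))"
        using Aint Eint by (rule set_integral_add(1))
      have G0: "G \<ge> 0" using Gx eps by simp
      have low: "AE s in lborel. s \<in> {0..t} \<longrightarrow> -2*C + (G * T powr (1-\<alpha>))/(T-s) \<le> A s + G * (T - s) powr (- \<alpha>)"
        using elim(5)
      proof eventually_elim
        case (elim s)
        show ?case
        proof
          assume s: "s \<in> {0..t}"
          then have sT: "s \<in> {0..<T}" and Ts: "T - s > 0" "T - s \<le> T" using t by auto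
          have uxs: "\<bar>u x s\<bar> \<le> C" using elim x s Ueq[OF x sT] by auto
          have "\<bar>A s\<bar> \<le> 2*C"
            unfolding A_def
          proof (rule inner_bound[OF Jnn Jint J1 Om])
            show "0 \<le> 2*C" using C by simp
            show "AE y in lebesgue. y \<in> \<Omega> \<longrightarrow> \<bar>u y s - u x s\<bar> \<le> 2*C"
              using bspec[OF nb sT]
            proof eventually_elim
              case (elim y)
              show ?case
              proof
                assume y: "y \<in> \<Omega>"
                have "\<bar>u y s\<bar> \<le> C" using elim y by blast
                moreover have "\<bar>u y s - u x s\<bar> \<le> \<bar>u y s\<bar> + \<bar>u x s\<bar>" by (rule abs_triangle_ineq4)
                ultimately show "\<bar>u y s - u x s\<bar> \<le> 2*C" using uxs by linarith
              qed
            qed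
          qed
          then have A1: "-2*C \<le> A s" by linarith
          have p1: "(T - s) powr (1-\<alpha>) = (T - s) * (T - s) powr (- \<alpha>)"
            using powr_add[of "T - s" 1 "- \<alpha>"] Ts by simp
          have p2: "T powr (1-\<alpha>) \<le> (T - s) powr (1-\<alpha>)"
            using a Ts by (intro powr_mono2') auto
          have "T powr (1-\<alpha>) / (T - s) \<le> (T - s) powr (- \<alpha>)"
            using p1 p2 Ts by (simp add: divide_le_eq mult.commute)
          then have "G * T powr (1-\<alpha>) / (T - s) \<le> G * (T - s) powr (- \<alpha>)"
            using G0 by (metis mult_left_mono times_divide_eq_right)
          then show "-2*C + (G * T powr (1-\<alpha>))/(T-s) \<le> A s + G * (T - s) powr (- \<alpha>)"
            using A1 by linarith
        qed
      qed
      have "(LBINT r=0..t. -2*C + (G * T powr (1-\<alpha>))/(T-r)) \<le> (LBINT s=0..t. A s + G * (T - s) powr (- \<alpha>))"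
      proof (rule lbint_lower[OF t(1) Fint _ low])
        show "continuous_on {0..t} (\<lambda>r. -2*C + (G * T powr (1-\<alpha>))/(T-r))"
          using t by (intro continuous_intros) auto
      qed
      moreover have "(LBINT r=0..t. -2*C + (G * T powr (1-\<alpha>))/(T-r)) = -2*C*t - (G * T powr (1-\<alpha>))*ln(T-t) + (G * T powr (1-\<alpha>))*ln T"
        by (rule ftc2[OF t])
      ultimately have "u x t \<ge> -2*C*t + (G * T powr (1-\<alpha>)) * (ln T - ln (T - t))"
        using eqx u0x by (simp add: algebra_simps)
      then have ge: "u x t \<ge> -2*C*t + (G * T powr (1-\<alpha>)) * M" by (simp add: lnM)
      have "c * M \<le> (G * T powr (1-\<alpha>)) * M"
        using Gx M T by (intro mult_right_mono) (auto simp: c_def)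
      moreover have "2*C*t \<le> 2*C*T" using C t by (intro mult_left_mono) auto
      ultimately have "u x t \<ge> C + 1" using ge cM by linarith
      then show False using ux by linarith
    qed
  qed
  then show False using Gpos by simp
qed


theorem lemma4p1:
  fixes \<Omega> :: "'a::euclidean_space set"
    and J h u0 :: "'a \<Rightarrow> real" and u :: "'a \<Rightarrow> real \<Rightarrow> real"
    and d T \<alpha> :: real
  assumes "open \<Omega>" and "bounded \<Omega>" and "connected \<Omega>" and "\<Omega> \<noteq> {}"
    and "nonlocal_kernel J d" and "ess_bounded_on UNIV J"
    and "T > 0" and "\<alpha> > 0"
    and "set_borel_measurable lebesgue (UNIV - \<Omega>) h"
    and "ess_bounded_on (UNIV - \<Omega>) h"
    and "AE y in lebesgue. y \<notin> \<Omega> \<longrightarrow> h y \<ge> 0"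
    and "(LINT x:\<Omega>|lebesgue. (LINT y:(UNIV - \<Omega>)|lebesgue. J (x - y) * h y)) > 0"
    and "set_borel_measurable lebesgue \<Omega> u0"
    and "ess_bounded_on \<Omega> u0"
    and "AE x in lebesgue. x \<in> \<Omega> \<longrightarrow> u0 x \<ge> 0"
    and "solves_N \<Omega> J (\<lambda>y t. h y * (T - t) powr (- \<alpha>)) T u0 u"
  shows "blows_up_at \<Omega> u T \<longleftrightarrow> \<alpha> \<ge> 1"
proof -
  have K: "nonlocal_kernel J d" using assms(5) .
  have Jnn: "\<And>x. J x \<ge> 0" and Jm: "J \<in> borel_measurable lebesgue"
    and Jint: "integrable lebesgue J" and J1: "integral\<^sup>L lebesgue J = 1"
    using K unfolding nonlocal_kernel_def by auto
  have Om: "\<Omega> \<in> sets lebesgue" using assms(1) by simp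
  obtain H0 where H0: "AE y in lebesgue. y \<in> UNIV - \<Omega> \<longrightarrow> \<bar>h y\<bar> \<le> H0"
    using assms(10) unfolding ess_bounded_on_def by blast
  define H where "H = max H0 0"
  have H: "H \<ge> 0" "AE y in lebesgue. y \<in> UNIV - \<Omega> \<longrightarrow> \<bar>h y\<bar> \<le> H"
    subgoal by (simp add: H_def)
    subgoal using H0 by eventually_elim (auto simp: H_def)
    done
  obtain V0 where V0: "AE x in lebesgue. x \<in> \<Omega> \<longrightarrow> \<bar>u0 x\<bar> \<le> V0"
    using assms(14) unfolding ess_bounded_on_def by blast
  define U0 where "U0 = max V0 0"
  have U0: "U0 \<ge> 0" "AE x in lebesgue. x \<in> \<Omega> \<longrightarrow> \<bar>u0 x\<bar> \<le> U0"
    subgoal by (simp add: U0_def)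
    subgoal using V0 by eventually_elim (auto simp: U0_def)
    done
  have meas: "(\<lambda>(x, t). indicator (\<Omega> \<times> {0..<T}) (x, t) * u x t) \<in> borel_measurable (lebesgue \<Otimes>\<^sub>M lborel)"
    using assms(16) unfolding solves_N_def by (rule conjunct1)
  have bnd: "\<forall>T'\<in>{0..<T}. \<exists>C. AE x in lebesgue. x \<in> \<Omega> \<longrightarrow> (\<forall>t\<in>{0..T'}. \<bar>u x t\<bar> \<le> C)"
    using assms(16) unfolding solves_N_def by (rule conjunct1[OF conjunct2])
  have eq: "AE x in lebesgue. x \<in> \<Omega> \<longrightarrow> (\<forall>t\<in>{0..<T}.
        u x t = u0 x + (LBINT s=0..t.
           (LINT y:\<Omega>|lebesgue. J (x - y) * (u y s - u x s)) +
           (LINT y:(UNIV - \<Omega>)|lebesgue. J (x - y) * (h y * (T - s) powr (- \<alpha>)))))"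
    using assms(16) unfolding solves_N_def by (rule conjunct2[OF conjunct2])
  show ?thesis
  proof
    assume bu: "blows_up_at \<Omega> u T"
    show "\<alpha> \<ge> 1"
    proof (rule ccontr)
      assume "\<not> \<alpha> \<ge> 1"
      then have a1: "\<alpha> < 1" by simp
      define B where "B = (U0 + H * T powr (1-\<alpha>)/(1-\<alpha>)) * exp(2*T)"
      have allB: "AE x in lebesgue. x \<in> \<Omega> \<longrightarrow> \<bar>u x t\<bar> \<le> B" if t: "t \<in> {0..<T}" for t
        unfolding B_def by (rule dir1[OF Jnn Jint J1 Om assms(7) assms(8) a1 H U0 bnd eq t])
      obtain t where "t \<in> {0..<T}" "\<not> (AE x in lebesgue. x \<in> \<Omega> \<longrightarrow> \<bar>u x t\<bar> \<le> B)"
        using bu unfolding blows_up_at_def by blast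
      then show False using allB by blast
    qed
  next
    assume a: "\<alpha> \<ge> 1"
    show "blows_up_at \<Omega> u T"
      unfolding blows_up_at_def
    proof (rule ccontr)
      assume "\<not> (\<forall>C. \<exists>t\<in>{0..<T}. \<not> (AE x in lebesgue. x \<in> \<Omega> \<longrightarrow> \<bar>u x t\<bar> \<le> C))"
      then obtain C0 where C0: "\<forall>t\<in>{0..<T}. AE x in lebesgue. x \<in> \<Omega> \<longrightarrow> \<bar>u x t\<bar> \<le> C0" by blast
      define C where "C = max C0 0"
      have C: "C \<ge> 0" "\<forall>t\<in>{0..<T}. AE x in lebesgue. x \<in> \<Omega> \<longrightarrow> \<bar>u x t\<bar> \<le> C"
      proof -
        show "C \<ge> 0" by (simp add: C_def)
        show "\<forall>t\<in>{0..<T}. AE x in lebesgue. x \<in> \<Omega> \<longrightarrow> \<bar>u x t\<bar> \<le> C"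
        proof
          fix t assume "t \<in> {0..<T}"
          then show "AE x in lebesgue. x \<in> \<Omega> \<longrightarrow> \<bar>u x t\<bar> \<le> C"
            using bspec[OF C0 \<open>t \<in> {0..<T}\<close>] by eventually_elim (auto simp: C_def)
        qed
      qed
      define G where "G x = (LINT y:(UNIV - \<Omega>)|lebesgue. J (x - y) * h y)" for x
      have "\<exists>n::nat. \<not> (AE x in lebesgue. x \<in> \<Omega> \<longrightarrow> G x \<le> 1 / real (Suc n))"
      proof (rule ccontr)
        assume "\<not> ?thesis"
        then have "\<forall>n::nat. AE x in lebesgue. x \<in> \<Omega> \<longrightarrow> G x \<le> 1 / real (Suc n)" by blast
        then have "AE x in lebesgue. \<forall>n::nat. x \<in> \<Omega> \<longrightarrow> G x \<le> 1 / real (Suc n)"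
          by (subst AE_all_countable) blast
        then have AE0: "AE x in lebesgue. indicator \<Omega> x *\<^sub>R G x \<le> 0"
        proof eventually_elim
          case (elim x)
          show ?case
          proof (cases "x \<in> \<Omega>")
            case True
            have "G x \<le> 0"
            proof (rule ccontr)
              assume "\<not> G x \<le> 0"
              then have "0 < G x" by simp
              then obtain n where n: "inverse (real (Suc n)) < G x" using reals_Archimedean by blast
              have "G x \<le> 1 / real (Suc n)" using elim True by blast
              then show False using n by (simp add: inverse_eq_divide)
            qed
            then show ?thesis using True by simp
          qed simp
        qed
        have "(LINT x:\<Omega>|lebesgue. G x) \<le> (\<integral>x. 0 \<partial>lebesgue)"
          unfolding set_lebesgue_integral_def
          using integral_mono_AE'[of lebesgue "\<lambda>x. 0" "\<lambda>x. indicator \<Omega> x *\<^sub>R G x"] AE0 by simp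
        then show False using assms(12) by (simp add: G_def)
      qed
      then obtain n :: nat where n: "\<not> (AE x in lebesgue. x \<in> \<Omega> \<longrightarrow> G x \<le> 1 / real (Suc n))" by blast
      show False
      proof (rule dir2[OF Jnn Jint J1 Jm Om assms(7) a meas _ bnd eq assms(15) _ _ C])
        show "\<And>x s. x \<in> \<Omega> \<Longrightarrow> s \<in> {0..<T} \<Longrightarrow> (case (x, s) of (x, t) \<Rightarrow> indicator (\<Omega> \<times> {0..<T}) (x, t) * u x t) = u x s"
          by (simp add: indicator_def)
        show "0 < 1 / real (Suc n)" by simp
        show "\<not> (AE x in lebesgue. x \<in> \<Omega> \<longrightarrow> (LINT y:(UNIV - \<Omega>)|lebesgue. J (x - y) * h y) \<le> 1 / real (Suc n))"
          using n by (simp add: G_def)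
      qed
    qed
  qed
qed

end
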